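(* Let $\bm A\in\mathbb{R}^{n\times n}$ be a graph adjacency matrix as in the context, and let $\bm M\in\{0,1\}^{n\times d}$ be a fixed (non-random) mask matrix such that every column $j$ contains at least one observed entry, i.e. $S_j:=\{1\le k\le n : \bm M_{k,j}=1\}\neq\emptyset$. Let $\bm X\in\mathbb{R}^{n\times d}$ be a random matrix whose entries $\bm X_{i,j}$ are independent and identically distributed with $\mathbb{E}(\bm X_{i,j})=0$ and $\mathrm{Var}(\bm X_{i,j})=1$. Define the imputed matrix $\hat{\bm X}\in\mathbb{R}^{n\times d}$ by $\hat{\bm X}_{i,j}=\bm X_{i,j}$ if $\bm M_{i,j}=1$, and, if $\bm M_{i,j}=0$, by $$\hat{\bm X}_{i,j}=\sum_{k\in S_j}\alpha^{(i,j)}_k\,\bm X_{k,j},$$ where for each missing position $(i,j)$ the weights $\alpha^{(i,j)}_k$ are fixed (non-random) real numbers with $\alpha^{(i,j)}_k\ge 0$ and $\sum_{k\in S_j}\alpha^{(i,j)}_k=1$ (i.e. each missing entry is filled by a convex combination of observed entries of the same column). Then $$\mathbb{E}\big[E_D(\hat{\bm X})\big]\le \mathbb{E}\big[E_D(\bm X)\big].$$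
   Context: A graph on $n$ nodes is given by an adjacency matrix $\bm A\in\mathbb{R}^{n\times n}$ that is symmetric, has nonnegative entries and zero diagonal. $\bm D$ is the diagonal degree matrix with $\bm D_{i,i}=\sum_j \bm A_{i,j}$. Set $\tilde{\bm A}=\bm A+\bm I_n$, $\tilde{\bm D}=\bm D+\bm I_n$, and the augmented normalized Laplacian $\tilde{\Delta}=\bm I_n-\tilde{\bm D}^{-1/2}\tilde{\bm A}\tilde{\bm D}^{-1/2}$. For a feature matrix $\bm X\in\mathbb{R}^{n\times d}$ (row $i$ = features of node $i$), the graph Dirichlet energy is $$E_D(\bm X)=\mathrm{tr}\big(\bm X^T\tilde{\Delta}\bm X\big)=\frac12\sum_{i,j=1}^n \bm A_{i,j}\Big\|\frac{\bm X_{i,:}}{\sqrt{1+\bm D_{i,i}}}-\frac{\bm X_{j,:}}{\sqrt{1+\bm D_{j,j}}}\Big\|^2,$$ with $\|\cdot\|$ the Euclidean norm. A mask matrix $\bm M\in\{0,1\}^{n\times d}$ indicates that entry $\bm X_{i,j}$ is observed iff $\bm M_{i,j}=1$. *)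

theory Defs
  imports "HOL-Probability.Probability"
begin

text \<open>Nodes are indexed by 0..<n, feature columns by 0..<d.
  An adjacency matrix is a function A :: nat => nat => real (entries A i j, i,j < n).\<close>

definition is_adjacency :: "nat \<Rightarrow> (nat \<Rightarrow> nat \<Rightarrow> real) \<Rightarrow> bool" where
  "is_adjacency n A \<longleftrightarrow>
     (\<forall>i<n. \<forall>j<n. A i j = A j i) \<and> (\<forall>i<n. \<forall>j<n. 0 \<le> A i j) \<and> (\<forall>i<n. A i i = 0)"

definition degree :: "nat \<Rightarrow> (nat \<Rightarrow> nat \<Rightarrow> real) \<Rightarrow> nat \<Rightarrow> real" where
  "degree n A i = (\<Sum>j<n. A i j)"

definition dirichlet_energy ::
    "nat \<Rightarrow> nat \<Rightarrow> (nat \<Rightarrow> nat \<Rightarrow> real) \<Rightarrow> (nat \<Rightarrow> nat \<Rightarrow> real) \<Rightarrow> real" where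
  "dirichlet_energy n d A X =
     1/2 * (\<Sum>i<n. \<Sum>j<n. A i j *
        (\<Sum>l<d. (X i l / sqrt (1 + degree n A i) - X j l / sqrt (1 + degree n A j))\<^sup>2))"

definition obs_set :: "nat \<Rightarrow> (nat \<Rightarrow> nat \<Rightarrow> bool) \<Rightarrow> nat \<Rightarrow> nat set" where
  "obs_set n Mk j = {k. k < n \<and> Mk k j}"

definition imputed ::
    "nat \<Rightarrow> (nat \<Rightarrow> nat \<Rightarrow> bool) \<Rightarrow> (nat \<Rightarrow> nat \<Rightarrow> nat \<Rightarrow> real) \<Rightarrow> (nat \<Rightarrow> nat \<Rightarrow> real)
     \<Rightarrow> nat \<Rightarrow> nat \<Rightarrow> real" where
  "imputed n Mk alpha X i j =
     (if Mk i j then X i j else (\<Sum>k\<in>obs_set n Mk j. alpha i j k * X k j))"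

end

theory Submission
  imports Defs
begin


lemma cross_term:
  fixes X :: "nat \<Rightarrow> nat \<Rightarrow> 'a \<Rightarrow> real"
  assumes prob: "prob_space M"
    and indep: "prob_space.indep_vars M (\<lambda>_. borel) (\<lambda>(i, j). X i j) ({..<n} \<times> {..<d})"
    and integrable: "\<forall>i<n. \<forall>j<d. integrable M (X i j)"
    and sq_integrable: "\<forall>i<n. \<forall>j<d. integrable M (\<lambda>\<omega>. (X i j \<omega>)\<^sup>2)"
    and mean0: "\<forall>i<n. \<forall>j<d. integral\<^sup>L M (X i j) = 0"
    and var1: "\<forall>i<n. \<forall>j<d.
                 integral\<^sup>L M (\<lambda>\<omega>. (X i j \<omega> - integral\<^sup>L M (X i j))\<^sup>2) = 1"
    and kml: "k < n" "m < n" "l < d"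
  shows "integrable M (\<lambda>\<omega>. X k l \<omega> * X m l \<omega>) \<and>
         integral\<^sup>L M (\<lambda>\<omega>. X k l \<omega> * X m l \<omega>) = (if k = m then 1 else 0)"
proof (cases "k = m")
  case True
  have "integrable M (\<lambda>\<omega>. (X m l \<omega>)\<^sup>2)" using sq_integrable kml by auto
  then have "integrable M (\<lambda>\<omega>. X k l \<omega> * X m l \<omega>)"
    using True unfolding power2_eq_square by simp
  moreover have "integral\<^sup>L M (\<lambda>\<omega>. X k l \<omega> * X m l \<omega>) = 1"
    using var1 mean0 kml True by (simp add: power2_eq_square)
  ultimately show ?thesis using True by simp
next
  case False
  interpret prob_space M by (rule prob)
  let ?Y = "(\<lambda>(i, j). X i j)"
  let ?I = "{(k,l),(m,l)}"
  have ind: "indep_vars (\<lambda>_. borel) ?Y ?I"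
    by (rule indep_vars_subset[OF indep]) (use kml in auto)
  have int: "\<And>p. p \<in> ?I \<Longrightarrow> integrable M (?Y p)" using integrable kml by auto
  have prodeq: "(\<lambda>\<omega>. \<Prod>p\<in>?I. ?Y p \<omega>) = (\<lambda>\<omega>. X k l \<omega> * X m l \<omega>)"
    using False by auto
  have "integrable M (\<lambda>\<omega>. \<Prod>p\<in>?I. ?Y p \<omega>)"
    by (rule indep_vars_integrable[OF _ ind int]) auto
  moreover have "(\<integral>\<omega>. (\<Prod>p\<in>?I. ?Y p \<omega>) \<partial>M) = (\<Prod>p\<in>?I. \<integral>\<omega>. ?Y p \<omega> \<partial>M)"
    by (rule indep_vars_lebesgue_integral[OF _ ind int]) auto
  moreover have "(\<Prod>p\<in>?I. \<integral>\<omega>. ?Y p \<omega> \<partial>M) = 0"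
    using False mean0 kml by simp
  ultimately show ?thesis using False prodeq by simp
qed

lemma square_sum_expand:
  fixes f :: "nat \<Rightarrow> real"
  shows "(\<Sum>k<n. f k)\<^sup>2 = (\<Sum>k<n. \<Sum>m<n. f k * f m)"
  by (simp add: power2_eq_square sum_product)

lemma lin_comb:
  fixes X :: "nat \<Rightarrow> nat \<Rightarrow> 'a \<Rightarrow> real" and v :: "nat \<Rightarrow> real"
  assumes prob: "prob_space M"
    and indep: "prob_space.indep_vars M (\<lambda>_. borel) (\<lambda>(i, j). X i j) ({..<n} \<times> {..<d})"
    and integrable: "\<forall>i<n. \<forall>j<d. integrable M (X i j)"
    and sq_integrable: "\<forall>i<n. \<forall>j<d. integrable M (\<lambda>\<omega>. (X i j \<omega>)\<^sup>2)"
    and mean0: "\<forall>i<n. \<forall>j<d. integral\<^sup>L M (X i j) = 0"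
    and var1: "\<forall>i<n. \<forall>j<d.
                 integral\<^sup>L M (\<lambda>\<omega>. (X i j \<omega> - integral\<^sup>L M (X i j))\<^sup>2) = 1"
    and l: "l < d"
  shows "integrable M (\<lambda>\<omega>. (\<Sum>k<n. v k * X k l \<omega>)\<^sup>2) \<and>
         integral\<^sup>L M (\<lambda>\<omega>. (\<Sum>k<n. v k * X k l \<omega>)\<^sup>2) = (\<Sum>k<n. (v k)\<^sup>2)"
proof -
  note ct = cross_term[OF prob indep integrable sq_integrable mean0 var1]
  have eq: "(\<lambda>\<omega>. (\<Sum>k<n. v k * X k l \<omega>)\<^sup>2) =
            (\<lambda>\<omega>. \<Sum>k<n. \<Sum>m<n. (v k * v m) * (X k l \<omega> * X m l \<omega>))"
    unfolding power2_eq_square sum_product by (simp add: mult_ac)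
  have ti: "\<And>k m. k < n \<Longrightarrow> m < n \<Longrightarrow>
      integrable M (\<lambda>\<omega>. (v k * v m) * (X k l \<omega> * X m l \<omega>))"
    using ct l by auto
  have "integrable M (\<lambda>\<omega>. \<Sum>k<n. \<Sum>m<n. (v k * v m) * (X k l \<omega> * X m l \<omega>))"
    using ti by (auto intro!: Bochner_Integration.integrable_sum)
  moreover have "integral\<^sup>L M (\<lambda>\<omega>. \<Sum>k<n. \<Sum>m<n. (v k * v m) * (X k l \<omega> * X m l \<omega>))
      = (\<Sum>k<n. \<Sum>m<n. (v k * v m) * (if k = m then 1 else 0))"
  proof -
    have "integral\<^sup>L M (\<lambda>\<omega>. \<Sum>k<n. \<Sum>m<n. (v k * v m) * (X k l \<omega> * X m l \<omega>))
        = (\<Sum>k<n. integral\<^sup>L M (\<lambda>\<omega>. \<Sum>m<n. (v k * v m) * (X k l \<omega> * X m l \<omega>)))"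
      using ti by (intro Bochner_Integration.integral_sum) (auto intro!: Bochner_Integration.integrable_sum)
    also have "\<dots> = (\<Sum>k<n. \<Sum>m<n. integral\<^sup>L M (\<lambda>\<omega>. (v k * v m) * (X k l \<omega> * X m l \<omega>)))"
      using ti by (intro sum.cong refl Bochner_Integration.integral_sum) auto
    also have "\<dots> = (\<Sum>k<n. \<Sum>m<n. (v k * v m) * (if k = m then 1 else 0))"
      using ct l by (intro sum.cong refl) auto
    finally show ?thesis .
  qed
  moreover have "(\<Sum>k<n. \<Sum>m<n. (v k * v m) * (if k = m then 1 else (0::real))) = (\<Sum>k<n. (v k)\<^sup>2)"
    by (simp add: if_distrib power2_eq_square cong: if_cong) 
  ultimately show ?thesis using eq by simp
qed


lemma lin_diff:
  fixes a b x :: "nat \<Rightarrow> real"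
  shows "(\<Sum>k<n. a k * x k) / s - (\<Sum>k<n. b k * x k) / t = (\<Sum>k<n. (a k / s - b k / t) * x k)"
  by (simp add: sum_divide_distrib sum_subtractf[symmetric] left_diff_distrib)

lemma energy_expect:
  fixes X :: "nat \<Rightarrow> nat \<Rightarrow> 'a \<Rightarrow> real" and W :: "nat \<Rightarrow> nat \<Rightarrow> nat \<Rightarrow> real"
    and Z :: "'a \<Rightarrow> nat \<Rightarrow> nat \<Rightarrow> real"
  assumes prob: "prob_space M"
    and indep: "prob_space.indep_vars M (\<lambda>_. borel) (\<lambda>(i, j). X i j) ({..<n} \<times> {..<d})"
    and integrable: "\<forall>i<n. \<forall>j<d. integrable M (X i j)"
    and sq_integrable: "\<forall>i<n. \<forall>j<d. integrable M (\<lambda>\<omega>. (X i j \<omega>)\<^sup>2)"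
    and mean0: "\<forall>i<n. \<forall>j<d. integral\<^sup>L M (X i j) = 0"
    and var1: "\<forall>i<n. \<forall>j<d.
                 integral\<^sup>L M (\<lambda>\<omega>. (X i j \<omega> - integral\<^sup>L M (X i j))\<^sup>2) = 1"
    and Z: "\<And>\<omega> i l. i < n \<Longrightarrow> l < d \<Longrightarrow> Z \<omega> i l = (\<Sum>k<n. W i l k * X k l \<omega>)"
  shows "integral\<^sup>L M (\<lambda>\<omega>. dirichlet_energy n d A (Z \<omega>)) =
     1/2 * (\<Sum>i<n. \<Sum>j<n. A i j * (\<Sum>l<d. \<Sum>k<n.
        (W i l k / sqrt (1 + degree n A i) - W j l k / sqrt (1 + degree n A j))\<^sup>2))"
proof -
  define V where "V i j l k = W i l k / sqrt (1 + degree n A i) - W j l k / sqrt (1 + degree n A j)" for i j l k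
  note lc = lin_comb[OF prob indep integrable sq_integrable mean0 var1]
  have de: "dirichlet_energy n d A (Z \<omega>) =
     1/2 * (\<Sum>i<n. \<Sum>j<n. A i j * (\<Sum>l<d. (\<Sum>k<n. V i j l k * X k l \<omega>)\<^sup>2))" for \<omega>
    unfolding dirichlet_energy_def V_def
    by (intro arg_cong[where f="\<lambda>x. 1/2 * x"] sum.cong refl arg_cong[where f="\<lambda>x. A _ _ * x"])
       (simp add: Z lin_diff)
  have "integral\<^sup>L M (\<lambda>\<omega>. dirichlet_energy n d A (Z \<omega>)) =
     1/2 * integral\<^sup>L M (\<lambda>\<omega>. \<Sum>i<n. \<Sum>j<n. A i j * (\<Sum>l<d. (\<Sum>k<n. V i j l k * X k l \<omega>)\<^sup>2))"
    unfolding de by simp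
  also have "integral\<^sup>L M (\<lambda>\<omega>. \<Sum>i<n. \<Sum>j<n. A i j * (\<Sum>l<d. (\<Sum>k<n. V i j l k * X k l \<omega>)\<^sup>2))
     = (\<Sum>i<n. \<Sum>j<n. A i j * (\<Sum>l<d. \<Sum>k<n. (V i j l k)\<^sup>2))"
  proof -
    have I3: "\<And>i j l. l < d \<Longrightarrow> integrable M (\<lambda>\<omega>. (\<Sum>k<n. V i j l k * X k l \<omega>)\<^sup>2)"
      using lc by blast
    have I2: "\<And>i j. integrable M (\<lambda>\<omega>. A i j * (\<Sum>l<d. (\<Sum>k<n. V i j l k * X k l \<omega>)\<^sup>2))"
      using I3 by (auto intro!: Bochner_Integration.integrable_sum)
    have I1: "\<And>i. integrable M (\<lambda>\<omega>. \<Sum>j<n. A i j * (\<Sum>l<d. (\<Sum>k<n. V i j l k * X k l \<omega>)\<^sup>2))"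
      using I2 by (auto intro!: Bochner_Integration.integrable_sum)
    have "integral\<^sup>L M (\<lambda>\<omega>. \<Sum>i<n. \<Sum>j<n. A i j * (\<Sum>l<d. (\<Sum>k<n. V i j l k * X k l \<omega>)\<^sup>2))
        = (\<Sum>i<n. integral\<^sup>L M (\<lambda>\<omega>. \<Sum>j<n. A i j * (\<Sum>l<d. (\<Sum>k<n. V i j l k * X k l \<omega>)\<^sup>2)))"
      using I1 by (intro Bochner_Integration.integral_sum) auto
    also have "\<dots> = (\<Sum>i<n. \<Sum>j<n. integral\<^sup>L M (\<lambda>\<omega>. A i j * (\<Sum>l<d. (\<Sum>k<n. V i j l k * X k l \<omega>)\<^sup>2)))"
      using I2 by (intro sum.cong refl Bochner_Integration.integral_sum) auto
    also have "\<dots> = (\<Sum>i<n. \<Sum>j<n. A i j * (\<Sum>l<d. integral\<^sup>L M (\<lambda>\<omega>. (\<Sum>k<n. V i j l k * X k l \<omega>)\<^sup>2)))"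
      using I3 by (subst integral_mult_right_zero, intro sum.cong refl arg_cong[where f="\<lambda>x. A _ _ * x"] Bochner_Integration.integral_sum) auto
    also have "\<dots> = (\<Sum>i<n. \<Sum>j<n. A i j * (\<Sum>l<d. \<Sum>k<n. (V i j l k)\<^sup>2))"
      using lc by (intro sum.cong refl arg_cong[where f="\<lambda>x. A _ _ * x"]) auto
    finally show ?thesis .
  qed
  finally show ?thesis unfolding V_def .
qed

lemma conv_term:
  fixes p q u v :: real
  assumes "0 \<le> p" "0 \<le> q" "0 \<le> u" "u \<le> 1" "0 \<le> v" "v \<le> 1"
  shows "(u * p - v * q)\<^sup>2 \<le> p\<^sup>2 * u + q\<^sup>2 * v"
proof -
  have "u\<^sup>2 \<le> u" using assms by (simp add: power2_eq_square mult_left_le)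
  moreover have "v\<^sup>2 \<le> v" using assms by (simp add: power2_eq_square mult_left_le)
  moreover have "0 \<le> u * v * p * q" using assms by simp
  ultimately have "p\<^sup>2 * u\<^sup>2 + q\<^sup>2 * v\<^sup>2 - 2 * (u * v * p * q) \<le> p\<^sup>2 * u + q\<^sup>2 * v"
    by (smt (verit) mult_left_mono zero_le_power2)
  then show ?thesis by (simp add: power2_eq_square algebra_simps)
qed

lemma conv_sum:
  fixes p q :: real and u v :: "nat \<Rightarrow> real"
  assumes "0 \<le> p" "0 \<le> q" "\<forall>k<n. 0 \<le> u k" "\<forall>k<n. 0 \<le> v k"
    "(\<Sum>k<n. u k) = 1" "(\<Sum>k<n. v k) = 1"
  shows "(\<Sum>k<n. (u k * p - v k * q)\<^sup>2) \<le> p\<^sup>2 + q\<^sup>2"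
proof -
  have ule: "u k \<le> 1" if "k < n" for k
  proof -
    have "u k \<le> (\<Sum>k<n. u k)" using assms that by (intro member_le_sum) auto
    then show ?thesis using assms by simp
  qed
  have vle: "v k \<le> 1" if "k < n" for k
  proof -
    have "v k \<le> (\<Sum>k<n. v k)" using assms that by (intro member_le_sum) auto
    then show ?thesis using assms by simp
  qed
  have "(\<Sum>k<n. (u k * p - v k * q)\<^sup>2) \<le> (\<Sum>k<n. p\<^sup>2 * u k + q\<^sup>2 * v k)"
    using assms ule vle by (intro sum_mono conv_term) auto
  also have "\<dots> = p\<^sup>2 + q\<^sup>2" using assms by (simp add: sum.distrib sum_distrib_left[symmetric])
  finally show ?thesis .
qed

lemma delta_sum:
  fixes p q :: real and n i j :: nat
  assumes "i < n" "j < n" "i \<noteq> j"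
  shows "(\<Sum>k<n. ((if k = i then 1 else 0) * p - (if k = j then 1 else 0) * q)\<^sup>2) = p\<^sup>2 + q\<^sup>2"
proof -
  have "(\<Sum>k<n. ((if k = i then 1 else 0) * p - (if k = j then 1 else 0) * q)\<^sup>2)
      = (\<Sum>k<n. (if k = i then p\<^sup>2 else 0) + (if k = j then q\<^sup>2 else 0))"
    using assms by (intro sum.cong refl) auto
  also have "\<dots> = p\<^sup>2 + q\<^sup>2" using assms by (simp add: sum.distrib sum.delta sum.delta')
  finally show ?thesis .
qed

theorem proposition3p2:
  fixes n d :: nat
    and A :: "nat \<Rightarrow> nat \<Rightarrow> real"
    and Mk :: "nat \<Rightarrow> nat \<Rightarrow> bool"
    and alpha :: "nat \<Rightarrow> nat \<Rightarrow> nat \<Rightarrow> real"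
    and M :: "'a measure"
    and X :: "nat \<Rightarrow> nat \<Rightarrow> 'a \<Rightarrow> real"
  assumes adj: "is_adjacency n A"
    and cols_observed: "\<forall>j<d. obs_set n Mk j \<noteq> {}"
    and weights_nonneg: "\<forall>i<n. \<forall>j<d. \<not> Mk i j \<longrightarrow> (\<forall>k\<in>obs_set n Mk j. 0 \<le> alpha i j k)"
    and weights_sum: "\<forall>i<n. \<forall>j<d. \<not> Mk i j \<longrightarrow> (\<Sum>k\<in>obs_set n Mk j. alpha i j k) = 1"
    and prob: "prob_space M"
    and rv: "\<forall>i<n. \<forall>j<d. X i j \<in> borel_measurable M"
    and indep: "prob_space.indep_vars M (\<lambda>_. borel) (\<lambda>(i, j). X i j) ({..<n} \<times> {..<d})"
    and ident: "\<forall>i<n. \<forall>j<d. \<forall>i'<n. \<forall>j'<d. distr M borel (X i j) = distr M borel (X i' j')"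
    and integrable: "\<forall>i<n. \<forall>j<d. integrable M (X i j)"
    and sq_integrable: "\<forall>i<n. \<forall>j<d. integrable M (\<lambda>\<omega>. (X i j \<omega>)\<^sup>2)"
    and mean0: "\<forall>i<n. \<forall>j<d. integral\<^sup>L M (X i j) = 0"
    and var1: "\<forall>i<n. \<forall>j<d.
                 integral\<^sup>L M (\<lambda>\<omega>. (X i j \<omega> - integral\<^sup>L M (X i j))\<^sup>2) = 1"
  shows "integral\<^sup>L M (\<lambda>\<omega>. dirichlet_energy n d A (imputed n Mk alpha (\<lambda>i j. X i j \<omega>)))
         \<le> integral\<^sup>L M (\<lambda>\<omega>. dirichlet_energy n d A (\<lambda>i j. X i j \<omega>))"
proof -
  define Wimp where "Wimp i l k = (if Mk i l then (if k = i then 1 else 0)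
      else (if k \<in> obs_set n Mk l then alpha i l k else (0::real)))" for i l k
  define Wid where "Wid i (l::nat) k = (if k = i then 1 else (0::real))" for i l k :: nat
  define s where "s i = sqrt (1 + degree n A i)" for i
  have degnn: "0 \<le> 1 + degree n A i" if "i < n" for i
  proof -
    have "0 \<le> degree n A i" unfolding degree_def
      using adj that unfolding is_adjacency_def by (intro sum_nonneg) auto
    then show ?thesis by simp
  qed
  have obs_sub: "obs_set n Mk l \<subseteq> {..<n}" for l unfolding obs_set_def by auto
  have restr: "(\<Sum>k<n. (if k \<in> obs_set n Mk l then f k else 0)) = (\<Sum>k\<in>obs_set n Mk l. f k)"
    for l and f :: "nat \<Rightarrow> real"
  proof -
    have "(\<Sum>k<n. (if k \<in> obs_set n Mk l then f k else 0)) = (\<Sum>k\<in>{..<n} \<inter> obs_set n Mk l. f k)"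
      by (simp add: sum.inter_restrict)
    also have "{..<n} \<inter> obs_set n Mk l = obs_set n Mk l" using obs_sub by blast
    finally show ?thesis .
  qed
  have Zimp: "imputed n Mk alpha (\<lambda>i j. X i j \<omega>) i l = (\<Sum>k<n. Wimp i l k * X k l \<omega>)"
    if "i < n" "l < d" for \<omega> i l
  proof (cases "Mk i l")
    case True
    have "(\<Sum>k<n. Wimp i l k * X k l \<omega>) = (\<Sum>k<n. (if k = i then X k l \<omega> else 0))"
      using True unfolding Wimp_def by (intro sum.cong refl) auto
    then show ?thesis using that True unfolding imputed_def by simp
  next
    case False
    have "(\<Sum>k<n. Wimp i l k * X k l \<omega>) = (\<Sum>k<n. (if k \<in> obs_set n Mk l then alpha i l k * X k l \<omega> else 0))"
      using False unfolding Wimp_def by (intro sum.cong refl) auto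
    also have "\<dots> = (\<Sum>k\<in>obs_set n Mk l. alpha i l k * X k l \<omega>)" by (rule restr)
    finally show ?thesis using False unfolding imputed_def by simp
  qed
  have Zid: "X i l \<omega> = (\<Sum>k<n. Wid i l k * X k l \<omega>)" if "i < n" "l < d" for \<omega> i l
  proof -
    have "(\<Sum>k<n. Wid i l k * X k l \<omega>) = (\<Sum>k<n. (if k = i then X k l \<omega> else 0))"
      unfolding Wid_def by (intro sum.cong refl) auto
    then show ?thesis using that by simp
  qed
  note EE = energy_expect[OF prob indep integrable sq_integrable mean0 var1]
  have L: "integral\<^sup>L M (\<lambda>\<omega>. dirichlet_energy n d A (imputed n Mk alpha (\<lambda>i j. X i j \<omega>))) =
     1/2 * (\<Sum>i<n. \<Sum>j<n. A i j * (\<Sum>l<d. \<Sum>k<n. (Wimp i l k / s i - Wimp j l k / s j)\<^sup>2))"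
    unfolding s_def by (rule EE) (rule Zimp)
  have R: "integral\<^sup>L M (\<lambda>\<omega>. dirichlet_energy n d A (\<lambda>i j. X i j \<omega>)) =
     1/2 * (\<Sum>i<n. \<Sum>j<n. A i j * (\<Sum>l<d. \<Sum>k<n. (Wid i l k / s i - Wid j l k / s j)\<^sup>2))"
    unfolding s_def by (rule EE) (rule Zid)
  have Wnn: "\<forall>k<n. 0 \<le> Wimp i l k" if "i < n" "l < d" for i l
    using weights_nonneg that unfolding Wimp_def by auto
  have Wsum: "(\<Sum>k<n. Wimp i l k) = 1" if "i < n" "l < d" for i l
  proof (cases "Mk i l")
    case True
    then show ?thesis using that unfolding Wimp_def by simp
  next
    case False
    have "(\<Sum>k<n. Wimp i l k) = (\<Sum>k<n. (if k \<in> obs_set n Mk l then alpha i l k else 0))"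
      using False unfolding Wimp_def by simp
    also have "\<dots> = (\<Sum>k\<in>obs_set n Mk l. alpha i l k)" by (rule restr)
    finally show ?thesis using weights_sum that False by simp
  qed
  have cmp: "A i j * (\<Sum>l<d. \<Sum>k<n. (Wimp i l k / s i - Wimp j l k / s j)\<^sup>2)
     \<le> A i j * (\<Sum>l<d. \<Sum>k<n. (Wid i l k / s i - Wid j l k / s j)\<^sup>2)" if "i < n" "j < n" for i j
  proof (cases "i = j")
    case True
    then show ?thesis using adj that unfolding is_adjacency_def by simp
  next
    case False
    have "0 \<le> A i j" using adj that unfolding is_adjacency_def by simp
    moreover have "(\<Sum>l<d. \<Sum>k<n. (Wimp i l k / s i - Wimp j l k / s j)\<^sup>2)
      \<le> (\<Sum>l<d. \<Sum>k<n. (Wid i l k / s i - Wid j l k / s j)\<^sup>2)"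
    proof (rule sum_mono)
      fix l assume l: "l \<in> {..<d}"
      have "(\<Sum>k<n. (Wimp i l k / s i - Wimp j l k / s j)\<^sup>2)
          = (\<Sum>k<n. (Wimp i l k * inverse (s i) - Wimp j l k * inverse (s j))\<^sup>2)"
        by (simp add: divide_inverse)
      also have "\<dots> \<le> (inverse (s i))\<^sup>2 + (inverse (s j))\<^sup>2"
        using l that Wnn Wsum degnn by (intro conv_sum) (auto simp: s_def)
      also have "\<dots> = (\<Sum>k<n. ((if k = i then 1 else 0) * inverse (s i) - (if k = j then 1 else 0) * inverse (s j))\<^sup>2)"
        using that False by (rule delta_sum[symmetric])
      also have "\<dots> = (\<Sum>k<n. (Wid i l k / s i - Wid j l k / s j)\<^sup>2)"
        unfolding Wid_def by (simp add: divide_inverse)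
      finally show "(\<Sum>k<n. (Wimp i l k / s i - Wimp j l k / s j)\<^sup>2)
          \<le> (\<Sum>k<n. (Wid i l k / s i - Wid j l k / s j)\<^sup>2)" .
    qed
    ultimately show ?thesis by (simp add: mult_left_mono)
  qed
  have "(\<Sum>i<n. \<Sum>j<n. A i j * (\<Sum>l<d. \<Sum>k<n. (Wimp i l k / s i - Wimp j l k / s j)\<^sup>2))
     \<le> (\<Sum>i<n. \<Sum>j<n. A i j * (\<Sum>l<d. \<Sum>k<n. (Wid i l k / s i - Wid j l k / s j)\<^sup>2))"
    by (intro sum_mono) (use cmp in auto)
  then show ?thesis unfolding L R by simp
qed

end
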